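(* Let $\mathcal Y=\{1,\dots,n\}$, $c\in(0,1)$ constant, and let $\mathcal H$ and $\mathcal R$ be closed under scaling. Let $\ell$ be a multi-class surrogate loss that is realizable $\mathcal H$-consistent with respect to $\ell_{0-1}$ (for $\mathcal H$ closed under scaling), and let $\Phi$ be non-increasing with $\Phi(t)\ge1_{t\le0}$ for all $t$ and $\lim_{t\to+\infty}\Phi(t)=0$. Let $\hat h$ be a minimizer of $\mathcal E_\ell$ over $\mathcal H$ and $\hat r$ a minimizer of $\mathcal E_{\ell_{\Phi,\hat h}}$ over $\mathcal R$. Then for any $(\mathcal H,\mathcal R)$-realizable distribution, $\mathcal E_{\mathsf L_{\rm abs}}(\hat h,\hat r)=0$.
   Context: $\mathsf h(x)=\arg\max_y h(x,y)$ with fixed tie-breaking; $\ell_{0-1}(h,x,y)=1_{\mathsf h(x)\ne y}$; $\mathsf L_{\rm abs}(h,r,x,y)=1_{\mathsf h(x)\ne y}1_{r(x)>0}+c\,1_{r(x)\le0}$; $\ell_{\Phi,h}(r,x,y)=1_{\mathsf h(x)\ne y}\Phi(-r(x))+c\,\Phi(r(x))$. $\mathcal E$ denotes expected loss and $\mathcal E^*$ its infimum over the relevant set. Closed under scaling: $g\in\mathcal G\Rightarrow\nu g\in\mathcal G$ for all $\nu\in\mathbb R$. A distribution is $(\mathcal H,\mathcal R)$-realizable if some $h^*\in\mathcal H,r^*\in\mathcal R$ have $\mathcal E_{\mathsf L_{\rm abs}}(h^*,r^* )=0$. $\ell$ is realizable $\mathcal H$-consistent w.r.t. $\ell_{0-1}$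 if for every distribution with $\mathcal E^*_{\ell_{0-1}}(\mathcal H)=0$ and every sequence $h_k\in\mathcal H$, $\lim_k\mathcal E_\ell(h_k)=\mathcal E^*_\ell(\mathcal H)$ implies $\lim_k\mathcal E_{\ell_{0-1}}(h_k)=0$. *)

theory Defs
  imports "HOL-Probability.Probability"
begin

text \<open>Labels are natural numbers; the label set is {1..n}. A scoring function
  h :: 'x => nat => real induces the prediction argmax_y h x y over {1..n},
  ties broken towards the smallest label.\<close>

definition pred :: "nat \<Rightarrow> ('x \<Rightarrow> nat \<Rightarrow> real) \<Rightarrow> 'x \<Rightarrow> nat" where
  "pred n h x = (LEAST y. y \<in> {1..n} \<and> (\<forall>y'\<in>{1..n}. h x y' \<le> h x y))"

definition zero_one_loss :: "nat \<Rightarrow> ('x \<Rightarrow> nat \<Rightarrow> real) \<Rightarrow> 'x \<Rightarrow> nat \<Rightarrow> ennreal" where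
  "zero_one_loss n h x y = (if pred n h x \<noteq> y then 1 else 0)"

definition abs_loss :: "nat \<Rightarrow> real \<Rightarrow> ('x \<Rightarrow> nat \<Rightarrow> real) \<Rightarrow> ('x \<Rightarrow> real) \<Rightarrow> 'x \<Rightarrow> nat \<Rightarrow> ennreal" where
  "abs_loss n c h r x y =
     ennreal ((if pred n h x \<noteq> y then 1 else 0) * (if r x > 0 then 1 else 0)
              + c * (if r x \<le> 0 then 1 else 0))"

definition phi_loss :: "nat \<Rightarrow> real \<Rightarrow> (real \<Rightarrow> real) \<Rightarrow> ('x \<Rightarrow> nat \<Rightarrow> real) \<Rightarrow> ('x \<Rightarrow> real) \<Rightarrow> 'x \<Rightarrow> nat \<Rightarrow> ennreal" where
  "phi_loss n c \<Phi> h r x y =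
     ennreal ((if pred n h x \<noteq> y then 1 else 0) * \<Phi> (- r x) + c * \<Phi> (r x))"

definition expected_loss :: "('x \<times> nat) measure \<Rightarrow> ('x \<Rightarrow> nat \<Rightarrow> ennreal) \<Rightarrow> ennreal" where
  "expected_loss D f = (\<integral>\<^sup>+ p. f (fst p) (snd p) \<partial>D)"

definition is_distribution :: "'x measure \<Rightarrow> nat \<Rightarrow> ('x \<times> nat) measure \<Rightarrow> bool" where
  "is_distribution MX n D \<longleftrightarrow> prob_space D \<and> sets D = sets (MX \<Otimes>\<^sub>M count_space UNIV)
     \<and> (AE p in D. snd p \<in> {1..n})"

definition realizable_consistent ::
  "'x measure \<Rightarrow> nat \<Rightarrow> ('x \<Rightarrow> nat \<Rightarrow> real) set \<Rightarrow> (('x \<Rightarrow> nat \<Rightarrow> real) \<Rightarrow> 'x \<Rightarrow> nat \<Rightarrow> ennreal) \<Rightarrow> bool" where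
  "realizable_consistent MX n H L \<longleftrightarrow>
     (\<forall>D. is_distribution MX n D \<longrightarrow>
        (INF h\<in>H. expected_loss D (zero_one_loss n h)) = 0 \<longrightarrow>
        (\<forall>hs. (\<forall>k. hs k \<in> H) \<longrightarrow>
           (\<lambda>k. expected_loss D (L (hs k))) \<longlonglongrightarrow> (INF h\<in>H. expected_loss D (L h)) \<longrightarrow>
           (\<lambda>k. expected_loss D (zero_one_loss n (hs k))) \<longlonglongrightarrow> 0))"

definition realizable ::
  "'x measure \<Rightarrow> nat \<Rightarrow> real \<Rightarrow> ('x \<Rightarrow> nat \<Rightarrow> real) set \<Rightarrow> ('x \<Rightarrow> real) set \<Rightarrow> ('x \<times> nat) measure \<Rightarrow> bool" where
  "realizable MX n c H R D \<longleftrightarrow> is_distribution MX n D \<and>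
     (\<exists>h\<in>H. \<exists>r\<in>R. expected_loss D (abs_loss n c h r) = 0)"

end

theory Submission imports Defs begin
lemma pred_meas[measurable]:
  assumes "\<And>y. (\<lambda>x. h x y) \<in> borel_measurable M"
  shows "pred n h \<in> measurable M (count_space UNIV)"
  unfolding pred_def
proof (rule measurable_Least)
  fix i
  note assms[measurable]
  show "(\<lambda>x. i \<in> {1..n} \<and> (\<forall>y'\<in>{1..n}. h x y' \<le> h x i)) \<in> measurable M (count_space UNIV)"
    by measurable
qed
lemma eq_snd_meas[measurable]:
  fixes f :: "'x \<Rightarrow> nat"
  assumes [measurable]: "f \<in> measurable MX (count_space UNIV)"
  shows "Measurable.pred (MX \<Otimes>\<^sub>M count_space UNIV) (\<lambda>p. f (fst p) = snd p)"
proof -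
  have "Measurable.pred (MX \<Otimes>\<^sub>M count_space UNIV) (\<lambda>p. (\<lambda>k p. f (fst p) = k) (snd p) p)"
    by (rule measurable_compose_countable) measurable
  then show ?thesis by simp
qed

lemma Phi_meas: assumes "antimono (\<Phi>::real\<Rightarrow>real)" shows "\<Phi> \<in> borel_measurable borel"
proof -
  have "mono (\<lambda>t. - \<Phi> t)" using assms by (auto simp: mono_def antimono_def)
  then have "(\<lambda>t. - \<Phi> t) \<in> borel_measurable borel" by (rule borel_measurable_mono)
  then have "(\<lambda>t. - (- \<Phi> t)) \<in> borel_measurable borel" by measurable
  then show ?thesis by simp
qed

theorem theorem12:
  fixes MX :: "'x measure" and n :: nat and c :: real
    and H :: "('x \<Rightarrow> nat \<Rightarrow> real) set" and R :: "('x \<Rightarrow> real) set"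
    and L :: "('x \<Rightarrow> nat \<Rightarrow> real) \<Rightarrow> 'x \<Rightarrow> nat \<Rightarrow> ennreal"
    and \<Phi> :: "real \<Rightarrow> real"
    and D :: "('x \<times> nat) measure"
    and hh :: "'x \<Rightarrow> nat \<Rightarrow> real" and rr :: "'x \<Rightarrow> real"
  assumes c: "0 < c" "c < 1"
    and H_scale: "\<And>g \<nu>. g \<in> H \<Longrightarrow> (\<lambda>x y. \<nu> * g x y) \<in> H"
    and R_scale: "\<And>g \<nu>. g \<in> R \<Longrightarrow> (\<lambda>x. \<nu> * g x) \<in> R"
    and H_meas: "\<And>h y. h \<in> H \<Longrightarrow> (\<lambda>x. h x y) \<in> borel_measurable MX"
    and R_meas: "\<And>r. r \<in> R \<Longrightarrow> r \<in> borel_measurable MX"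
    and cons: "realizable_consistent MX n H L"
    and Phi_mono: "antimono \<Phi>"
    and Phi_ge: "\<And>t. \<Phi> t \<ge> (if t \<le> 0 then 1 else 0)"
    and Phi_lim: "(\<Phi> \<longlongrightarrow> 0) at_top"
    and real: "realizable MX n c H R D"
    and hh: "hh \<in> H" "expected_loss D (L hh) = (INF h\<in>H. expected_loss D (L h))"
    and rr: "rr \<in> R"
      "expected_loss D (phi_loss n c \<Phi> hh rr) = (INF r\<in>R. expected_loss D (phi_loss n c \<Phi> hh r))"
  shows "expected_loss D (abs_loss n c hh rr) = 0"
proof -
  have dist: "is_distribution MX n D" using real by (simp add: realizable_def)
  then have sD: "sets D = sets (MX \<Otimes>\<^sub>M count_space UNIV)" and ps: "prob_space D"
    by (auto simp: is_distribution_def)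
  have mD: "measurable D N = measurable (MX \<Otimes>\<^sub>M count_space UNIV) N" for N :: "'b measure"
    by (rule measurable_cong_sets[OF sD refl])
  have Phi0: "0 \<le> \<Phi> t" for t using Phi_ge[of t] by (auto split: if_splits)
  note Phim[measurable] = Phi_meas[OF Phi_mono]
  obtain hs rs where hs: "hs \<in> H" and rs: "rs \<in> R"
    and E0: "expected_loss D (abs_loss n c hs rs) = 0"
    using real by (auto simp: realizable_def)
  have [measurable]: "(\<lambda>x. hs x y) \<in> borel_measurable MX" for y using H_meas[OF hs] .
  have [measurable]: "(\<lambda>x. hh x y) \<in> borel_measurable MX" for y using H_meas[OF hh(1)] .
  have [measurable]: "rs \<in> borel_measurable MX" using R_meas[OF rs] .
  have [measurable]: "rr \<in> borel_measurable MX" using R_meas[OF rr(1)] .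
  have "(\<lambda>p. abs_loss n c hs rs (fst p) (snd p)) \<in> borel_measurable D"
    unfolding mD abs_loss_def by measurable
  then have "AE p in D. abs_loss n c hs rs (fst p) (snd p) = 0"
    using E0 by (simp add: expected_loss_def nn_integral_0_iff_AE)
  then have AE1: "AE p in D. pred n hs (fst p) = snd p \<and> rs (fst p) > 0"
    by eventually_elim (use c in \<open>auto simp: abs_loss_def split: if_splits\<close>)
  have "expected_loss D (zero_one_loss n hs) = 0"
    unfolding expected_loss_def
    by (rule trans[OF nn_integral_cong_AE[where v="\<lambda>_. 0"]])
       (use AE1 in \<open>auto elim!: eventually_mono simp: zero_one_loss_def\<close>)
  then have INF01: "(INF h\<in>H. expected_loss D (zero_one_loss n h)) = 0"
    using hs by (metis INF_lower le_zero_eq)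
  have "(\<lambda>k. expected_loss D (zero_one_loss n hh)) \<longlonglongrightarrow> 0"
    using cons dist INF01 hh unfolding realizable_consistent_def by auto
  then have "expected_loss D (zero_one_loss n hh) = 0" by (simp add: LIMSEQ_const_iff)
  moreover have "(\<lambda>p. zero_one_loss n hh (fst p) (snd p)) \<in> borel_measurable D"
    unfolding mD zero_one_loss_def by measurable
  ultimately have "AE p in D. zero_one_loss n hh (fst p) (snd p) = 0"
    by (simp add: expected_loss_def nn_integral_0_iff_AE)
  then have AE2: "AE p in D. pred n hh (fst p) = snd p"
    by eventually_elim (auto simp: zero_one_loss_def split: if_splits)
  have AE12: "AE p in D. pred n hh (fst p) = snd p \<and> rs (fst p) > 0"
    using AE1 AE2 by eventually_elim auto
  define g where "g k p = (if rs (fst p) > 0 then ennreal (c * \<Phi> (real (Suc k) * rs (fst p))) else 0)"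
    for k :: nat and p :: "'x \<times> nat"
  have gm[measurable]: "g k \<in> borel_measurable D" for k
    unfolding mD g_def by measurable
  have Eg: "expected_loss D (phi_loss n c \<Phi> hh (\<lambda>x. real (Suc k) * rs x)) = integral\<^sup>N D (g k)" for k
    unfolding expected_loss_def
    by (rule nn_integral_cong_AE, rule eventually_mono[OF AE12]) (auto simp: phi_loss_def g_def)
  have le1: "(INF r\<in>R. expected_loss D (phi_loss n c \<Phi> hh r)) \<le> (INF k. integral\<^sup>N D (g k))"
  proof (rule INF_greatest)
    fix k :: nat
    show "(INF r\<in>R. expected_loss D (phi_loss n c \<Phi> hh r)) \<le> integral\<^sup>N D (g k)"
      using INF_lower[OF R_scale[OF rs, of "real (Suc k)"], of "\<lambda>r. expected_loss D (phi_loss n c \<Phi> hh r)"]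
      unfolding Eg .
  qed
  have dec: "g (Suc k) p \<le> g k p" for k p
  proof (cases "rs (fst p) > 0")
    case True
    then have "real (Suc k) * rs (fst p) \<le> real (Suc (Suc k)) * rs (fst p)" by simp
    then have "\<Phi> (real (Suc (Suc k)) * rs (fst p)) \<le> \<Phi> (real (Suc k) * rs (fst p))"
      using Phi_mono by (auto simp: antimono_def)
    then show ?thesis using True c by (simp add: g_def ennreal_leI)
  qed (simp add: g_def)
  have "integral\<^sup>N D (g 0) \<le> integral\<^sup>N D (\<lambda>_. ennreal (c * \<Phi> 0))"
  proof (rule nn_integral_mono)
    fix p
    show "g 0 p \<le> ennreal (c * \<Phi> 0)"
    proof (cases "rs (fst p) > 0")
      case True
      then have "\<Phi> (real (Suc 0) * rs (fst p)) \<le> \<Phi> 0"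
        using Phi_mono by (auto simp: antimono_def)
      then show ?thesis using True c by (simp add: g_def ennreal_leI)
    qed (simp add: g_def)
  qed
  also have "\<dots> = ennreal (c * \<Phi> 0)"
    using prob_space.emeasure_space_1[OF ps] by simp
  finally have fin: "integral\<^sup>N D (g 0) < \<infinity>"
    by (simp add: le_less_trans)
  have eq: "integral\<^sup>N D (\<lambda>p. INF k. g k p) = (INF k. integral\<^sup>N D (g k))"
    by (rule nn_integral_monotone_convergence_INF_AE'[of g, OF _ gm fin]) (simp add: dec)
  have pt: "(INF k. g k p) = 0" for p
  proof (cases "rs (fst p) > 0")
    case True
    have ds: "decseq (\<lambda>k. g k p)" by (rule decseq_SucI) (simp add: dec)
    have fS: "filterlim (\<lambda>k. real (Suc k)) at_top sequentially"
      using filterlim_sequentially_Suc[of "\<lambda>k. real k"] filterlim_real_sequentially by simp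
    have "filterlim (\<lambda>k. rs (fst p) * real (Suc k)) at_top sequentially"
      by (rule filterlim_tendsto_pos_mult_at_top[OF tendsto_const True fS])
    then have "filterlim (\<lambda>k. real (Suc k) * rs (fst p)) at_top sequentially"
      by (simp add: mult.commute)
    then have "(\<lambda>k. \<Phi> (real (Suc k) * rs (fst p))) \<longlonglongrightarrow> 0"
      by (rule filterlim_compose[OF Phi_lim])
    then have "(\<lambda>k. c * \<Phi> (real (Suc k) * rs (fst p))) \<longlonglongrightarrow> c * 0"
      by (intro tendsto_mult tendsto_const)
    then have "(\<lambda>k. ennreal (c * \<Phi> (real (Suc k) * rs (fst p)))) \<longlonglongrightarrow> ennreal (c * 0)"
      by (rule tendsto_ennrealI)
    then have "(\<lambda>k. g k p) \<longlonglongrightarrow> ennreal 0"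
      using True unfolding g_def by simp
    moreover have "(\<lambda>k. g k p) \<longlonglongrightarrow> (INF k. g k p)" by (rule LIMSEQ_INF[OF ds])
    ultimately show ?thesis using LIMSEQ_unique by fastforce
  qed (simp add: g_def)
  have "expected_loss D (phi_loss n c \<Phi> hh rr) = 0"
    using le1 eq pt rr(2) by simp
  moreover have "(\<lambda>p. phi_loss n c \<Phi> hh rr (fst p) (snd p)) \<in> borel_measurable D"
    unfolding mD phi_loss_def by measurable
  ultimately have "AE p in D. phi_loss n c \<Phi> hh rr (fst p) (snd p) = 0"
    by (simp add: expected_loss_def nn_integral_0_iff_AE)
  then have AE3: "AE p in D. rr (fst p) > 0"
  proof (rule eventually_mono)
    fix p assume "phi_loss n c \<Phi> hh rr (fst p) (snd p) = 0"
    then have "(if pred n hh (fst p) \<noteq> snd p then 1 else 0) * \<Phi> (- rr (fst p)) + c * \<Phi> (rr (fst p)) \<le> 0"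
      by (simp only: phi_loss_def ennreal_eq_0_iff)
    moreover have "0 \<le> (if pred n hh (fst p) \<noteq> snd p then 1 else 0) * \<Phi> (- rr (fst p))"
      using Phi0 by simp
    ultimately have "c * \<Phi> (rr (fst p)) \<le> 0" by linarith
    then have "\<Phi> (rr (fst p)) \<le> 0" using c by (simp add: mult_le_0_iff)
    then show "rr (fst p) > 0" using Phi_ge[of "rr (fst p)"] by (auto split: if_splits)
  qed
  show ?thesis
    unfolding expected_loss_def
  proof (rule trans[OF nn_integral_cong_AE[where v="\<lambda>_. 0"]])
    show "AE p in D. abs_loss n c hh rr (fst p) (snd p) = 0"
      using AE2 AE3 by eventually_elim (simp add: abs_loss_def)
  qed simp
qed
end
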